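(* Let $p$ be an odd prime, $k$ algebraically closed of characteristic $p$, $d=p^2+1$, and let $X$ be the Artin–Schreier curve $y^p-y=-x^{d}-x^{d/2+p}$ over $k$. Let $k_0$ be an integer with $0\le k_0<\frac{p-1}{2}$ and $l$ an integer with $0\le l\le \frac{d(p/2-1-k_0)}{p}$. Then there exists $y^mx^ndx\in\mathcal B_X$ with $m<\frac{p-1}{2}$ such that the largest term of $\mathcal C_X(y^mx^ndx)$ is $y^{k_0}x^ldx$.
   Context: $\mathcal C_X$ is the Cartier operator on $H^0(X,\Omega^1_X)$: the $p^{-1}$-semilinear map with $\mathcal C_X(f^p\alpha+\beta)=f\,\mathcal C_X(\alpha)+\mathcal C_X(\beta)$, $\mathcal C_X(x^{p-1}dx)=dx$, $\mathcal C_X(x^ndx)=0$ for $n\not\equiv-1\pmod p$. For an Artin–Schreier curve $y^p-y=f$ with $f\in k[x]$ of degree $D$ prime to $p$, the set $$\mathcal B_X=\left\{y^ix^jdx:\ 0\le i\le p-2,\ 0\le j\le \left\lceil\tfrac{(p-i-1)D}{p}\right\rceil-2\right\}$$ is a $k$-basis of $H^0(X,\Omega^1_X)$. Order $\mathcal B_X$ lexicographically with $y>x$: $y^ix^jdx>y^ax^bdx$ iff $i>a$, or $i=a$ and $j>b$. The "largest term" of a nonzero differential $\omega\in H^0(X,\Omega^1_X)$ is the largest element of $\mathcal B_X$ appearing with nonzero coefficient when $\omega$ is written in the basis $\mathcal B_X$. *)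

theory Defs
  imports "HOL-Computational_Algebra.Computational_Algebra"
begin

text \<open>Differentials g(x,y) dx on the Artin-Schreier curve y^p - y = f(x) are represented
by the polynomial g :: 'a poly poly: the outer variable is y, the inner (coefficient)
polynomials are polynomials in x.\<close>

definition as_coeff :: "'a::zero poly poly \<Rightarrow> nat \<Rightarrow> nat \<Rightarrow> 'a" where
  "as_coeff g i j = coeff (coeff g i) j"

definition proot :: "nat \<Rightarrow> 'a::field \<Rightarrow> 'a" where
  "proot p c = (THE r. r ^ p = c)"

definition cartier_x :: "nat \<Rightarrow> 'a::field poly \<Rightarrow> 'a poly" where
  "cartier_x p g = (\<Sum>k\<le>degree g. monom (proot p (coeff g (p * k + p - 1))) k)"

text \<open>Cartier operator on y^m x^n dx, for the curve y^p - y = f: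
 y^m = (y^p - f)^m = \<Sum>t. (y^t)^p * (m choose t) (-f)^(m-t), hence
 C(y^m x^n dx) = \<Sum>t. y^t C((m choose t) (-f)^(m-t) x^n dx).\<close>
definition cartier_mono :: "nat \<Rightarrow> 'a::field poly \<Rightarrow> nat \<Rightarrow> nat \<Rightarrow> 'a poly poly" where
  "cartier_mono p f m n =
     (\<Sum>t\<le>m. monom (cartier_x p (smult (of_nat (m choose t)) ((- f) ^ (m - t) * monom 1 n))) t)"

text \<open>The basis B_X of H^0(X, Omega^1), as index pairs (i,j) for y^i x^j dx; D = deg f.\<close>
definition AS_basis :: "nat \<Rightarrow> nat \<Rightarrow> (nat \<times> nat) set" where
  "AS_basis p D = {(i, j). i \<le> p - 2 \<and>
      int j \<le> \<lceil>real ((p - i - 1) * D) / real p\<rceil> - 2}"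

text \<open>Lexicographic order with y > x.\<close>
definition lex_le :: "nat \<times> nat \<Rightarrow> nat \<times> nat \<Rightarrow> bool" where
  "lex_le a b \<longleftrightarrow> fst a < fst b \<or> (fst a = fst b \<and> snd a \<le> snd b)"

definition largest_term :: "nat \<Rightarrow> nat \<Rightarrow> 'a::zero poly poly \<Rightarrow> nat \<times> nat \<Rightarrow> bool" where
  "largest_term p D g ij \<longleftrightarrow> ij \<in> AS_basis p D \<and> as_coeff g (fst ij) (snd ij) \<noteq> 0 \<and>
     (\<forall>ab \<in> AS_basis p D. as_coeff g (fst ab) (snd ab) \<noteq> 0 \<longrightarrow> lex_le ab ij)"

end

theory Submission
  imports Defs "HOL-Number_Theory.Cong"
begin


lemma proot_zero:
  assumes "p > 0" shows "proot p (0::'a::field) = 0"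
  unfolding proot_def using assms by (intro the_equality) auto

lemma frob_inj:
  fixes r s :: "'a::field"
  assumes "prime CHAR('a)" "r ^ CHAR('a) = s ^ CHAR('a)"
  shows "r = s"
proof -
  have "(r - s + s) ^ CHAR('a) = (r - s) ^ CHAR('a) + s ^ CHAR('a)"
    by (rule freshmans_dream) (use assms in auto)
  then have "(r - s) ^ CHAR('a) = 0" using assms by simp
  then show ?thesis by simp
qed

lemma proot_pow:
  fixes c :: "'a::field"
  assumes "prime CHAR('a)" "p = CHAR('a)"
    and cl: "\<forall>q :: 'a poly. degree q \<ge> 1 \<longrightarrow> (\<exists>z. poly q z = 0)"
  shows "proot p c ^ p = c"
proof -
  have p0: "p > 0" using assms prime_gt_0_nat by blast
  define q where "q = [:-c:] + monom (1::'a) p"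
  have "degree q = p" unfolding q_def using p0
    by (subst degree_add_eq_right) (auto simp: degree_monom_eq)
  then have "degree q \<ge> 1" using p0 by simp
  then obtain z where "poly q z = 0" using cl by blast
  then have z: "z ^ p = c" unfolding q_def by (simp add: poly_monom)
  have "\<exists>!r. r ^ p = c"
    using z frob_inj[OF assms(1)] assms(2) by metis
  then show ?thesis unfolding proot_def by (rule theI')
qed

lemma proot_nonzero:
  fixes c :: "'a::field"
  assumes "prime CHAR('a)" "p = CHAR('a)"
    and cl: "\<forall>q :: 'a poly. degree q \<ge> 1 \<longrightarrow> (\<exists>z. poly q z = 0)"
    and "c \<noteq> 0"
  shows "proot p c \<noteq> 0"
  using proot_pow[OF assms(1-3), of c] assms(4) prime_gt_0_nat[of p] assms(1,2)
  by (metis power_0_left neq0_conv)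

lemma coeff_cartier_x:
  fixes g :: "'a::field poly"
  assumes "p > 0" "proot p (0::'a::field) = 0"
  shows "coeff (cartier_x p g) k = proot p (coeff g (p*k+p-1))"
proof (cases "k \<le> degree g")
  case True
  then show ?thesis unfolding cartier_x_def by (simp add: coeff_sum coeff_monom)
next
  case False
  have "p*k+p-1 \<ge> k" using assms(1) by (cases p) auto
  then have "coeff g (p*k+p-1) = 0" using False by (intro coeff_eq_0) auto
  then show ?thesis using False assms unfolding cartier_x_def by (simp add: coeff_sum coeff_monom)
qed

lemma as_coeff_cartier_mono:
  assumes "p > 0" "proot p (0::'a::field) = 0"
  shows "as_coeff (cartier_mono p (f::'a poly) m n) t k =
    (if t \<le> m then proot p (of_nat (m choose t) * coeff ((-f)^(m-t) * monom 1 n) (p*k+p-1)) else 0)"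
  unfolding as_coeff_def cartier_mono_def
  by (simp add: coeff_sum coeff_monom coeff_cartier_x[OF assms] assms)

lemma binom_pow:
  "(monom (1::'a::comm_ring_1) b + monom 1 a)^e = (\<Sum>j\<le>e. monom (of_nat (e choose j)) (b*j + a*(e-j)))"
  by (simp add: binomial_ring monom_power of_nat_poly mult_monom mult.commute smult_monom)
     (rule sum.cong, auto simp: ac_simps)

lemma coeff_pow_mult:
  "coeff ((monom (1::'a::comm_ring_1) b + monom 1 a)^e * monom 1 n) N =
   (\<Sum>j\<le>e. if b*j + a*(e-j) + n = N then of_nat (e choose j) else 0)"
  by (simp add: binom_pow sum_distrib_right mult_monom coeff_sum coeff_monom)



lemma two_X:
  fixes p d j e :: nat
  assumes "odd p" "d = p^2+1" "j \<le> e"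
  shows "2*(d*j + (d div 2 + p)*(e-j)) = e + j + p*(2*p*j + (p+2)*(e-j))"
proof -
  obtain c where c: "e = j + c" using assms(3) le_Suc_ex by blast
  have ev: "2 * (d div 2) = d" using assms(1,2) by simp
  have "2*(d*j + (d div 2 + p)*(e-j)) = 2*d*j + (2*(d div 2) + 2*p)*c" using c
    by (simp add: algebra_simps)
  also have "\<dots> = 2*(p^2+1)*j + (p^2 + 1 + 2*p)*c" using ev assms(2) by simp
  also have "\<dots> = e + j + p*(2*p*j + (p+2)*(e-j))" using c by (simp add: algebra_simps power2_eq_square)
  finally show ?thesis .
qed

lemma dvd_red:
  fixes p d j e n k :: nat
  assumes "odd p" "d = p^2+1" "j \<le> e" "p > 0"
    and "d*j + (d div 2 + p)*(e-j) + n = p*k + p - 1"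
  shows "p dvd (e + j + 2*n + 2)"
proof -
  have "2*(d*j + (d div 2 + p)*(e-j)) + 2*n + 2 = 2*(p*k+p)"
    using assms(4,5) by simp
  then have "e + j + 2*n + 2 + p*(2*p*j + (p+2)*(e-j)) = p*(2*(k+1))"
    using two_X[OF assms(1-3)] by (simp add: algebra_simps)
  then have "p dvd (p*(2*p*j + (p+2)*(e-j)) + (e + j + 2*n + 2))"
    by (metis add.commute dvd_triv_left)
  then show ?thesis by (metis dvd_add_right_iff dvd_triv_left)
qed

lemma arith_unique:
  fixes p d e0 j0 n l e j k :: nat
  assumes "odd p" "d = p^2+1" "p > 0"
    and "j0 \<le> e0" "e0 \<le> j0 + 1" "2*e0 < p"
    and h0: "d*j0 + (d div 2 + p)*(e0-j0) + n = p*l + p - 1"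
    and "e \<le> e0" "j \<le> e"
    and h1: "d*j + (d div 2 + p)*(e-j) + n = p*k + p - 1"
  shows "e = e0 \<and> j = j0 \<and> k = l"
proof -
  have a: "p dvd (e0 + j0 + 2*n + 2)" by (rule dvd_red[OF assms(1,2,4,3) h0])
  have b: "p dvd (e + j + 2*n + 2)" by (rule dvd_red[OF assms(1,2) assms(9) assms(3) h1])
  have "[e0 + j0 + (2*n+2) = e + j + (2*n+2)] (mod p)"
    using a b by (metis add.assoc cong_0_iff cong_sym cong_trans)
  then have "[e0 + j0 = e + j] (mod p)" using cong_add_rcancel_nat by blast
  then have s: "e0 + j0 = e + j" 
    by (rule cong_less_modulus_unique_nat) (use assms in auto)
  have "e = e0" using s assms by linarith
  moreover have "j = j0" using s \<open>e = e0\<close> by simp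
  ultimately have "p*l + p - 1 = p*k + p - 1" using h0 h1 by simp
  then have "p*l = p*k" using assms(3) by (cases p) auto
  then show ?thesis using \<open>e = e0\<close> \<open>j = j0\<close> assms(3) by simp
qed



lemma choose_not_dvd:
  fixes p m k :: nat
  assumes "prime p" "m < p" "k \<le> m"
  shows "\<not> p dvd (m choose k)"
proof
  assume "p dvd (m choose k)"
  then have "p dvd fact k * fact (m-k) * (m choose k)" by simp
  then have "p dvd (fact m :: nat)" using binomial_fact_lemma[OF assms(3)] by simp
  then show False using prime_dvd_fact_iff[OF assms(1)] assms(2) by simp
qed

lemma mainG:
  fixes p d k0 l e0 j0 n :: nat and f :: "'a::field poly"
  assumes pr: "prime p" and od: "odd p"
    and ch: "CHAR('a) = p"
    and cl: "\<forall>q :: 'a poly. degree q \<ge> 1 \<longrightarrow> (\<exists>z. poly q z = 0)"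
    and dd: "d = p ^ 2 + 1"
    and ff: "f = - monom 1 d - monom 1 (d div 2 + p)"
    and j0e0: "j0 \<le> e0" "e0 \<le> j0 + 1" and mp: "2*(k0+e0) + 3 \<le> p"
    and h0: "d*j0 + (d div 2 + p)*(e0-j0) + n = p*l + p - 1"
    and bl: "(k0,l) \<in> AS_basis p d"
  shows "largest_term p d (cartier_mono p f (k0+e0) n) (k0,l)"
proof -
  define m where "m = k0 + e0"
  define a where "a = d div 2 + p"
  have p0: "p > 0" using pr prime_gt_0_nat by blast
  have pz: "proot p (0::'a) = 0" using proot_zero[OF p0] .
  have mf: "-f = monom 1 d + monom 1 a" unfolding ff a_def by simp
  have AC: "as_coeff (cartier_mono p f m n) t k =
    (if t \<le> m then proot p (of_nat (m choose t) *
       (\<Sum>j\<le>m-t. if d*j + a*(m-t-j) + n = p*k+p-1 then of_nat (m-t choose j) else (0::'a))) else 0)"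
    for t k
    unfolding as_coeff_cartier_mono[OF p0 pz] mf coeff_pow_mult by simp
  have Z: "as_coeff (cartier_mono p f m n) t k = 0" if "k0 \<le> t" "(t,k) \<noteq> (k0,l)" for t k
  proof (cases "t \<le> m")
    case True
    have "(\<Sum>j\<le>m-t. if d*j + a*(m-t-j) + n = p*k+p-1 then of_nat (m-t choose j) else (0::'a)) = 0"
    proof (intro sum.neutral ballI)
      fix j assume j: "j \<in> {..m-t}"
      show "(if d*j + a*(m-t-j) + n = p*k+p-1 then of_nat (m-t choose j) else (0::'a)) = 0"
      proof (rule ccontr)
        assume "\<not> ?thesis"
        then have eq: "d*j + a*(m-t-j) + n = p*k+p-1" by (auto split: if_splits)
        have "m - t = e0 \<and> j = j0 \<and> k = l"
          by (rule arith_unique[OF od dd p0 j0e0 _ h0 _ _ eq[unfolded a_def]])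
             (use mp j that m_def in auto)
        then show False using that True m_def by auto
      qed
    qed
    then show ?thesis using AC[of t k] pz by simp
  next
    case False
    then show ?thesis using AC[of t k] by simp
  qed
  have S: "(\<Sum>j\<le>m-k0. if d*j + a*(m-k0-j) + n = p*l+p-1 then of_nat (m-k0 choose j) else (0::'a))
       = of_nat (e0 choose j0)"
  proof -
    have "(\<Sum>j\<le>m-k0. if d*j + a*(m-k0-j) + n = p*l+p-1 then of_nat (m-k0 choose j) else (0::'a))
        = (\<Sum>j\<le>e0. if j = j0 then of_nat (e0 choose j) else (0::'a))"
    proof (intro sum.cong refl)
      fix j assume j: "j \<in> {..e0}"
      have "d*j + a*(e0-j) + n = p*l+p-1 \<longleftrightarrow> j = j0"
      proof
        assume eq: "d*j + a*(e0-j) + n = p*l+p-1"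
        show "j = j0"
          using arith_unique[OF od dd p0 j0e0 _ h0 _ _ eq[unfolded a_def]] mp j m_def by auto
      qed (use h0 a_def in simp)
      then show "(if d*j + a*(m-k0-j) + n = p*l+p-1 then of_nat (m-k0 choose j) else (0::'a))
          = (if j = j0 then of_nat (e0 choose j) else 0)" using m_def by simp
    qed (use m_def in simp)
    also have "\<dots> = of_nat (e0 choose j0)" using j0e0 by simp
    finally show ?thesis .
  qed
  have nz1: "of_nat (m choose k0) \<noteq> (0::'a)"
    using choose_not_dvd[OF pr, of m k0] mp m_def of_nat_eq_0_iff_char_dvd ch by auto
  have nz2: "of_nat (e0 choose j0) \<noteq> (0::'a)"
    using choose_not_dvd[OF pr, of e0 j0] mp j0e0 of_nat_eq_0_iff_char_dvd ch by auto
  have chp: "prime CHAR('a)" using ch pr by simp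
  have NZ: "as_coeff (cartier_mono p f m n) k0 l \<noteq> 0"
    using AC[of k0 l] S nz1 nz2 proot_nonzero[OF chp ch[symmetric] cl] m_def by simp
  show ?thesis
    unfolding largest_term_def m_def[symmetric]
  proof (intro conjI ballI impI)
    show "(k0, l) \<in> AS_basis p d" by (rule bl)
    show "as_coeff (cartier_mono p f m n) (fst (k0, l)) (snd (k0, l)) \<noteq> 0" using NZ by simp
    fix ab :: "nat \<times> nat"
    assume "as_coeff (cartier_mono p f m n) (fst ab) (snd ab) \<noteq> 0"
    then have "\<not> (k0 \<le> fst ab \<and> (fst ab, snd ab) \<noteq> (k0, l))" using Z by blast
    then show "lex_le ab (k0, l)" unfolding lex_le_def by (cases ab) auto
  qed
qed



lemma basisI:
  fixes p d m n :: nat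
  assumes "m \<le> p - 2" "p*(n+1) < (p-m-1)*d"
  shows "(m, n) \<in> AS_basis p d"
proof -
  have p0: "p > 0" using assms(2) by (cases p) auto
  define X where "X = real ((p-m-1)*d) / real p"
  have c: "real (n+1) * real p < real ((p-m-1)*d)" using assms(2)
    by (metis of_nat_less_iff of_nat_mult mult.commute)
  have x: "real (n+1) < X" unfolding X_def using c p0 by (subst pos_less_divide_eq) auto
  have "int n + 2 \<le> \<lceil>X\<rceil>"
    unfolding le_ceiling_iff using x by simp
  then show ?thesis unfolding AS_basis_def using assms(1) X_def by simp
qed

theorem mainTheorem5:
  fixes p d k0 l :: nat and f :: "'a::field poly"
  assumes "prime p" and "odd p"
    and "CHAR('a) = p"
    and "\<forall>q :: 'a poly. degree q \<ge> 1 \<longrightarrow> (\<exists>z. poly q z = 0)"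
    and "d = p ^ 2 + 1"
    and "f = - monom 1 d - monom 1 (d div 2 + p)"
    and "real k0 < (real p - 1) / 2"
    and "real l \<le> real d * (real p / 2 - 1 - real k0) / real p"
  shows "\<exists>m n. (m, n) \<in> AS_basis p d \<and> real m < (real p - 1) / 2 \<and>
           largest_term p d (cartier_mono p f m n) (k0, l)"
proof -
  note pr = assms(1) and od = assms(2) and dd = assms(5)
  have p2: "p \<ge> 2" using pr prime_ge_2_nat by blast
  have p3: "p \<ge> 3" using p2 od by (cases "p = 2") auto
  have "real (2*k0 + 1) < real p" using assms(7) by simp
  then have "2*k0 + 1 < p" by linarith
  then have k0p: "2*k0 + 3 \<le> p" using od by presburger
  define u where "u = (p - 3) div 2 - k0"
  have pu: "p = 2*u + 2*k0 + 3" using k0p od unfolding u_def by presburger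
  define h where "h = d div 2"
  have dh: "d = 2*h" unfolding h_def dd using od by simp
  have hp: "2*h = p*p + 1" using dh dd by (simp add: power2_eq_square)
  have pd: "p*l \<le> h*(2*u+1)"
  proof -
    have "real p = 2*real u + 2*real k0 + 3" using pu by simp
    then have "real p / 2 - 1 - real k0 = real (2*u+1) / 2" by (simp add: field_simps)
    then have "real d * (real p / 2 - 1 - real k0) = real h * real (2*u+1)" using dh by simp
    then have "real l \<le> real h * real (2*u+1) / real p" using assms(8) by simp
    then have "real l * real p \<le> real h * real (2*u+1)" using p2 by (simp add: field_simps)
    then have "real (p*l) \<le> real (h*(2*u+1))" by (metis of_nat_mult mult.commute)
    then show ?thesis by linarith
  qed
  have hd: "h*(2*u+1) = d*u + h" using dh by (simp add: algebra_simps)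
  have "3*p \<le> p*p" using p3 by simp
  then have hbig: "p + 1 < h" using hp p3 by linarith
  define N where "N = p*l + p - 1"
  have NN: "N + 1 = p*l + p" unfolding N_def using p2 by simp
  have Nle: "N + 1 \<le> d*u + h + p" using NN pd hd by linarith
  define E where "E = N div d"
  have d0: "d > 0" using dd by simp
  have E1: "d*E \<le> N" unfolding E_def by simp
  have E2: "N < d*E + d" unfolding E_def using d0
    by (metis add.commute div_mult_mod_eq mod_less_divisor nat_add_left_cancel_less mult.commute)
  have bl: "(k0,l) \<in> AS_basis p d"
  proof (rule basisI)
    show "k0 \<le> p - 2" using k0p by simp
    have "p - k0 - 1 = 2*u + k0 + 2" using pu by simp
    then have "(p-k0-1)*d = h*(2*u+1) + h*p" using dh pu by (simp add: algebra_simps)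
    moreover have "p < h*p" using hbig p2 by simp
    moreover have "p*(l+1) = p*l + p" by simp
    ultimately show "p*(l+1) < (p-k0-1)*d" using pd by linarith
  qed
  have main: "largest_term p d (cartier_mono p f (k0+e0) n) (k0,l)"
    if "j0 \<le> e0" "e0 \<le> j0 + 1" "2*(k0+e0) + 3 \<le> p"
       "d*j0 + (d div 2 + p)*(e0-j0) + n = p*l + p - 1" for e0 j0 n
    by (rule mainG[OF pr od assms(3,4) dd assms(6) that bl])
  have rm: "real m < (real p - 1) / 2" if "2*m + 3 \<le> p" for m
  proof -
    have "real (2*m+3) \<le> real p" using that of_nat_le_iff by blast
    then have "2*real m + 3 \<le> real p" by simp
    then show ?thesis by (simp add: field_simps)
  qed
  have fin: "\<exists>m n. (m, n) \<in> AS_basis p d \<and> real m < (real p - 1) / 2 \<and>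
           largest_term p d (cartier_mono p f m n) (k0, l)"
    if "j0 \<le> e0" "e0 \<le> j0 + 1" "2*(k0+e0) + 3 \<le> p"
       "d*j0 + (d div 2 + p)*(e0-j0) + n = p*l + p - 1"
       "p*(n+1) < (p-(k0+e0)-1)*d" for e0 j0 n
  proof (intro exI conjI)
    show "(k0+e0, n) \<in> AS_basis p d" using that(3,5) by (intro basisI) auto
    show "real (k0+e0) < (real p - 1) / 2" using rm that(3) by blast
    show "largest_term p d (cartier_mono p f (k0+e0) n) (k0,l)" by (rule main[OF that(1-4)])
  qed
  have dhalf: "d div 2 = h" unfolding h_def ..
  have ddE: "d*(E+1) = d*E + d" by simp
  have ddu: "d*(u+1) = d*u + d" by simp
  show ?thesis
  proof (cases "N < d*E + h + p")
    case True
    define n where "n = N - d*E"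
    have nE: "n + d*E = N" unfolding n_def using E1 by simp
    have "d*E < d*(u+1)" using E1 Nle ddu dh hbig by linarith
    then have "E < u+1" using d0 by (metis mult_less_cancel1)
    then have Eu: "E \<le> u" by simp
    have h0: "d*E + (d div 2 + p)*(E-E) + n = p*l + p - 1" using nE N_def by simp
    have n1: "n + 1 \<le> h + p" using True nE by linarith
    show ?thesis
    proof (cases "E < u")
      case True
      have q1: "u + k0 + 3 \<le> p - (k0+E) - 1" using True pu by simp
      have q2: "(u+k0+3)*d \<le> (p-(k0+E)-1)*d" using q1 by (rule mult_le_mono1)
      have q3: "(u+k0+3)*d = p*h + 3*h" using dh pu by (simp add: algebra_simps)
      have q4: "p*(n+1) \<le> p*(h+p)" using n1 by (rule mult_le_mono2)
      have q5: "p*(h+p) = p*h + p*p" by (simp add: algebra_simps)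
      show ?thesis
      proof (rule fin[OF _ _ _ h0])
        show "2 * (k0 + E) + 3 \<le> p" using Eu unfolding pu by simp
        show "p * (n + 1) < (p - (k0 + E) - 1) * d" using q2 q3 q4 q5 hp by linarith
      qed auto
    next
      case False
      then have Eu': "E = u" using Eu by simp
      define r where "r = d*u + h - p*l"
      have "p*l \<le> d*u + h" using pd hd by linarith
      then have rr: "p*l + r = d*u + h" unfolding r_def by simp
      have "2*(p*l + r) = (2*h)*(2*u+1)" using rr dh by (simp add: algebra_simps)
      then have "2*(p*l + r) = (p*p+1)*(2*u+1)" using hp by simp
      then have "2*(r+k0+1) + p*(2*l) = p*(p*(2*u+1)+1)" using pu by (simp add: algebra_simps)
      then have "p dvd (2*(r+k0+1) + p*(2*l))" by (metis dvd_triv_left)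
      then have "p dvd 2*(r+k0+1)" by (metis dvd_add_right_iff dvd_triv_left add.commute)
      moreover have "\<not> p dvd 2" using p3 by (metis dvd_imp_le le_antisym nat_le_linear not_numeral_le_zero numeral_le_iff semiring_norm(69) zero_less_numeral numerals(1) Suc_n_not_le_n eval_nat_numeral(3) le_trans)
      ultimately have "p dvd (r+k0+1)" using pr prime_dvd_mult_iff by blast
      then have rk: "p \<le> r + k0 + 1" by (rule dvd_imp_le) simp
      have "n + d*u = N" using nE Eu' by simp
      then have n1': "n + 1 + r = h + p" using rr NN by linarith
      have q1: "p - (k0+E) - 1 = u + k0 + 2" using Eu' pu by simp
      have q3: "(u+k0+2)*d = p*h + h" using dh pu by (simp add: algebra_simps)
      have q4: "p*(n+1) \<le> p*(h+k0+1)" using n1' rk by (intro mult_le_mono2) linarith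
      have q6: "p*(2*k0+3) \<le> p*p" using k0p by (rule mult_le_mono2)
      have q7: "p*(2*k0+3) = p*(2*k0+2) + p" by (simp add: algebra_simps)
      have q8: "p*(h+k0+1) = p*h + p*(k0+1)" by (simp add: algebra_simps)
      have q9: "p*(2*k0+2) = 2*(p*(k0+1))" by (simp add: algebra_simps)
      show ?thesis
      proof (rule fin[OF _ _ _ h0])
        show "2 * (k0 + E) + 3 \<le> p" using Eu unfolding pu by simp
        have "(p - (k0 + E) - 1) * d = p*h + h" using q1 q3 by simp
        then show "p * (n + 1) < (p - (k0 + E) - 1) * d" using q4 q6 q7 q8 q9 hp by linarith
      qed auto
    qed
  next
    case False
    define n where "n = N - d*E - h - p"
    have nE: "n + d*E + h + p = N" unfolding n_def using False by simp
    have "d*E < d*u" using nE Nle by linarith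
    then have Eu: "E < u" using d0 by (metis mult_less_cancel1)
    have h0: "d*E + (d div 2 + p)*(E+1-E) + n = p*l + p - 1" using nE N_def dhalf by simp
    have n1: "n + 1 + p \<le> h" using E2 nE dh by linarith
    have q1: "u + k0 + 2 \<le> p - (k0+(E+1)) - 1" using Eu pu by simp
    have q2: "(u+k0+2)*d \<le> (p-(k0+(E+1))-1)*d" using q1 by (rule mult_le_mono1)
    have q3: "(u+k0+2)*d = p*h + h" using dh pu by (simp add: algebra_simps)
    have q4: "p*(n+1) \<le> p*h" using n1 by (intro mult_le_mono2) linarith
    show ?thesis
    proof (rule fin[OF _ _ _ h0])
      show "2 * (k0 + (E+1)) + 3 \<le> p" using Eu unfolding pu by simp
      show "p * (n + 1) < (p - (k0 + (E+1)) - 1) * d" using q2 q3 q4 hbig by linarith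
    qed auto
  qed
qed


end
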